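(* Let $\mathcal R=(\mathbf N,G,\mathcal P)$ be a max game and let $\mathbf p$ be a routing. If a greedy move by some player $i$ takes $\mathbf p$ to a routing $\mathbf p'$, then $\mathbf p'<\mathbf p$ in the order defined below (i.e. $M(\mathbf p')<M(\mathbf p)$).
   Context: A routing game is a tuple $\mathcal R=(\mathbf N,G,\mathcal P)$: players $\mathbf N=\{1,\dots,N\}$ ($N\ge1$), a graph $G=(V,E)$ with $n=|V|$ nodes, and for each player $i$ a nonempty finite set $\mathcal P_i$ of paths in $G$ from a source $u_i$ to a destination $v_i$; $\mathcal P=\bigcup_i\mathcal P_i$. A routing is $\mathbf p=[p_1,\dots,p_N]$ with $p_i\in\mathcal P_i$; $(p_i';\mathbf p_{-i})$ denotes the routing obtained by replacing $p_i$ with $p_i'$. For an edge $e$, $C_e(\mathbf p)$ is the number of players $j$ with $e\in p_j$; $C_i(\mathbf p)=\max_{e\in p_i}C_e(\mathbf p)$; $D_i(\mathbf p)=|p_i|$ (number of edges); $C(\mathbf p)=\max_{e\in E}C_e(\mathbf p)$; $D(\mathbf p)=\max_i|p_i|$; $L=\max_{p\in\mathcal P}|p|$. A max game is a routing game with player cost $pc_i(\mathbf p)=\max(C_i(\mathbf p),D_i(\mathbf p))$ and social cost $SC(\mathbf p)=\max(C(\mathbf p),D(\mathbf p))$. A greedy move by player $i$ takes $\mathbf p$ to $\mathbf p'=(p_i';\mathbf p_{-i})$ for some $p_i'\in\mathcal P_i$ with $pc_i(\mathbf p')<pc_i(\mathbf p)$. Order: let $r=\max(N,L)$; the routing vector is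 $M(\mathbf p)=[m_1(\mathbf p),\dots,m_r(\mathbf p)]$ with $m_k(\mathbf p)=a_k(\mathbf p)+b_k(\mathbf p)$, where $a_k(\mathbf p)$ is the number of players $j$ with $C_j(\mathbf p)=k$ and $b_k(\mathbf p)$ is the number of players $j$ with $D_j(\mathbf p)=k$. Write $M(\mathbf p')<M(\mathbf p)$ (and $\mathbf p'<\mathbf p$) if there is $j\in\{1,\dots,r\}$ with $m_k(\mathbf p')=m_k(\mathbf p)$ for all $k>j$ and $m_j(\mathbf p')<m_j(\mathbf p)$. *)

theory Defs
  imports Main
begin

definition path_edges :: "'v list \<Rightarrow> 'v set set" where
  "path_edges p = {{p ! k, p ! Suc k} | k. Suc k < length p}"

definition path_len :: "'v list \<Rightarrow> nat" where
  "path_len p = length p - 1"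

definition is_path :: "'v set \<Rightarrow> 'v set set \<Rightarrow> 'v \<Rightarrow> 'v \<Rightarrow> 'v list \<Rightarrow> bool" where
  "is_path V E u v p \<longleftrightarrow> p \<noteq> [] \<and> hd p = u \<and> last p = v \<and> distinct p
     \<and> set p \<subseteq> V \<and> (\<forall>k. Suc k < length p \<longrightarrow> {p ! k, p ! Suc k} \<in> E)"

definition routing_game ::
  "nat \<Rightarrow> 'v set \<Rightarrow> 'v set set \<Rightarrow> (nat \<Rightarrow> 'v) \<Rightarrow> (nat \<Rightarrow> 'v) \<Rightarrow> (nat \<Rightarrow> 'v list set) \<Rightarrow> bool" where
  "routing_game N V E src dst P \<longleftrightarrow> N \<ge> 1 \<and> finite V
     \<and> (\<forall>e\<in>E. e \<subseteq> V \<and> card e = 2)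
     \<and> (\<forall>i\<in>{1..N}. finite (P i) \<and> P i \<noteq> {}
          \<and> (\<forall>p\<in>P i. is_path V E (src i) (dst i) p))"

definition is_routing :: "nat \<Rightarrow> (nat \<Rightarrow> 'v list set) \<Rightarrow> (nat \<Rightarrow> 'v list) \<Rightarrow> bool" where
  "is_routing N P p \<longleftrightarrow> (\<forall>i\<in>{1..N}. p i \<in> P i)"

definition edge_cong :: "nat \<Rightarrow> (nat \<Rightarrow> 'v list) \<Rightarrow> 'v set \<Rightarrow> nat" where
  "edge_cong N p e = card {j\<in>{1..N}. e \<in> path_edges (p j)}"

text \<open>C_i(p): max congestion on the edges of p_i (0 for a path with no edges).\<close>
definition player_cong :: "nat \<Rightarrow> (nat \<Rightarrow> 'v list) \<Rightarrow> nat \<Rightarrow> nat" where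
  "player_cong N p i = Max (insert 0 (edge_cong N p ` path_edges (p i)))"

definition player_len :: "(nat \<Rightarrow> 'v list) \<Rightarrow> nat \<Rightarrow> nat" where
  "player_len p i = path_len (p i)"

definition player_cost :: "nat \<Rightarrow> (nat \<Rightarrow> 'v list) \<Rightarrow> nat \<Rightarrow> nat" where
  "player_cost N p i = max (player_cong N p i) (player_len p i)"

definition max_path_len :: "nat \<Rightarrow> (nat \<Rightarrow> 'v list set) \<Rightarrow> nat" where
  "max_path_len N P = Max (path_len ` (\<Union>i\<in>{1..N}. P i))"

definition rvec_len :: "nat \<Rightarrow> (nat \<Rightarrow> 'v list set) \<Rightarrow> nat" where
  "rvec_len N P = max N (max_path_len N P)"

definition rvec_entry :: "nat \<Rightarrow> (nat \<Rightarrow> 'v list) \<Rightarrow> nat \<Rightarrow> nat" where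
  "rvec_entry N p k = card {j\<in>{1..N}. player_cong N p j = k}
                    + card {j\<in>{1..N}. player_len p j = k}"

definition routing_less ::
  "nat \<Rightarrow> (nat \<Rightarrow> 'v list set) \<Rightarrow> (nat \<Rightarrow> 'v list) \<Rightarrow> (nat \<Rightarrow> 'v list) \<Rightarrow> bool" where
  "routing_less N P p' p \<longleftrightarrow> (\<exists>j\<in>{1..rvec_len N P}.
      (\<forall>k. j < k \<and> k \<le> rvec_len N P \<longrightarrow> rvec_entry N p' k = rvec_entry N p k)
      \<and> rvec_entry N p' j < rvec_entry N p j)"

end

theory Submission
  imports Defs
begin

lemma finite_path_edges: "finite (path_edges p)"
proof -
  have "path_edges p = (\<lambda>k. {p ! k, p ! Suc k}) ` {k. Suc k < length p}"
    unfolding path_edges_def by auto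
  moreover have "finite {k. Suc k < length p}"
    by (rule finite_subset[of _ "{..<length p}"]) auto
  ultimately show ?thesis by simp
qed

lemma edge_cong_le_pc:
  "e \<in> path_edges (p j) \<Longrightarrow> edge_cong N p e \<le> player_cong N p j"
  unfolding player_cong_def by (simp add: finite_path_edges)

lemma pc_attained:
  assumes "player_cong N p j > 0"
  shows "\<exists>e\<in>path_edges (p j). edge_cong N p e = player_cong N p j"
proof -
  have f: "finite (insert 0 (edge_cong N p ` path_edges (p j)))" by (simp add: finite_path_edges)
  have "player_cong N p j \<in> insert 0 (edge_cong N p ` path_edges (p j))"
    unfolding player_cong_def using Max_in[OF f] by blast
  thus ?thesis using assms by auto
qed

lemma pc_le:
  assumes "\<And>e. e \<in> path_edges (p j) \<Longrightarrow> edge_cong N p e \<le> b"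
  shows "player_cong N p j \<le> b"
  unfolding player_cong_def using assms by (simp add: finite_path_edges)

lemma edge_cong_le_N: "edge_cong N p e \<le> N"
proof -
  have "edge_cong N p e \<le> card {1..N}" unfolding edge_cong_def
    by (rule card_mono) auto
  thus ?thesis by simp
qed

lemma pc_le_N: "player_cong N p j \<le> N"
  by (rule pc_le) (rule edge_cong_le_N)

lemma ec_sub:
  assumes "e \<notin> path_edges q"
  shows "edge_cong N (p(i := q)) e \<le> edge_cong N p e"
  unfolding edge_cong_def by (rule card_mono) (use assms in auto)

lemma ec_sup:
  assumes "e \<notin> path_edges (p i)"
  shows "edge_cong N p e \<le> edge_cong N (p(i := q)) e"
  unfolding edge_cong_def by (rule card_mono) (use assms in auto)

theorem mainTheorem1:
  fixes N :: nat and V :: "'v set" and E :: "'v set set"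
    and src dst :: "nat \<Rightarrow> 'v" and P :: "nat \<Rightarrow> 'v list set"
    and p :: "nat \<Rightarrow> 'v list" and i :: nat and q :: "'v list"
  assumes "routing_game N V E src dst P"
    and "is_routing N P p"
    and "i \<in> {1..N}"
    and "q \<in> P i"
    and "player_cost N (p(i := q)) i < player_cost N p i"
  shows "routing_less N P (p(i := q)) p"
proof -
  define p' where "p' = p(i := q)"
  define c where "c = player_cost N p i"
  have lt: "player_cost N p' i < c" using assms(5) unfolding p'_def c_def .
  have p'i: "p' i = q" unfolding p'_def by simp
  have p'j: "\<And>j. j \<noteq> i \<Longrightarrow> p' j = p j" unfolding p'_def by simp
  have ci: "player_cong N p i \<le> c" "player_len p i \<le> c" unfolding c_def player_cost_def by auto
  have ci': "player_cong N p' i < c" "player_len p' i < c"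
    using lt unfolding player_cost_def by auto
  have cmax: "player_cong N p i = c \<or> player_len p i = c" unfolding c_def player_cost_def by auto
  have qec: "\<And>e. e \<in> path_edges q \<Longrightarrow> edge_cong N p' e \<le> c - 1"
  proof -
    fix e assume "e \<in> path_edges q"
    hence "edge_cong N p' e \<le> player_cong N p' i" using edge_cong_le_pc[of e p' i] p'i by simp
    thus "edge_cong N p' e \<le> c - 1" using ci' by linarith
  qed
  have A: "\<And>j. player_cong N p' j \<le> max (player_cong N p j) (c - 1)"
  proof -
    fix j
    show "player_cong N p' j \<le> max (player_cong N p j) (c - 1)"
    proof (rule pc_le)
      fix e assume e: "e \<in> path_edges (p' j)"
      show "edge_cong N p' e \<le> max (player_cong N p j) (c - 1)"
      proof (cases "e \<in> path_edges q")
        case True then show ?thesis using qec by fastforce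
      next
        case False
        hence "edge_cong N p' e \<le> edge_cong N p e" using ec_sub unfolding p'_def by blast
        moreover have "j \<noteq> i" using False e p'i by auto
        hence "edge_cong N p e \<le> player_cong N p j" using e p'j edge_cong_le_pc by metis
        ultimately show ?thesis by simp
      qed
    qed
  qed
  have B: "\<And>j. j \<noteq> i \<Longrightarrow> player_cong N p j > c \<Longrightarrow> player_cong N p j \<le> player_cong N p' j"
  proof -
    fix j assume j: "j \<noteq> i" "player_cong N p j > c"
    then obtain e where e: "e \<in> path_edges (p j)" "edge_cong N p e = player_cong N p j"
      using pc_attained[of N p j] by auto
    have "e \<notin> path_edges (p i)"
      using edge_cong_le_pc[of e p i N] e j ci by auto
    hence "edge_cong N p e \<le> edge_cong N p' e" using ec_sup unfolding p'_def by blast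
    also have "\<dots> \<le> player_cong N p' j" using edge_cong_le_pc[of e p' j N] e p'j[OF j(1)] by simp
    finally show "player_cong N p j \<le> player_cong N p' j" using e by simp
  qed
  have hi: "\<And>k. c < k \<Longrightarrow> rvec_entry N p' k = rvec_entry N p k"
  proof -
    fix k assume k: "c < k"
    have "{j\<in>{1..N}. player_cong N p' j = k} = {j\<in>{1..N}. player_cong N p j = k}"
    proof (intro Collect_cong conj_cong refl iffI)
      fix j assume "j \<in> {1..N}" "player_cong N p' j = k"
      moreover have "j \<noteq> i" using ci' k calculation by auto
      ultimately show "player_cong N p j = k" using A[of j] B[of j] k by fastforce
    next
      fix j assume "j \<in> {1..N}" "player_cong N p j = k"
      moreover have "j \<noteq> i" using ci k calculation by auto
      ultimately show "player_cong N p' j = k" using A[of j] B[of j] k by fastforce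
    qed
    moreover have "{j\<in>{1..N}. player_len p' j = k} = {j\<in>{1..N}. player_len p j = k}"
    proof (intro Collect_cong conj_cong refl)
      fix j assume "j \<in> {1..N}"
      show "(player_len p' j = k) = (player_len p j = k)"
      proof (cases "j = i")
        case True thus ?thesis using ci ci' k by auto
      next
        case False thus ?thesis using p'j unfolding player_len_def by simp
      qed
    qed
    ultimately show "rvec_entry N p' k = rvec_entry N p k" unfolding rvec_entry_def by simp
  qed
  have atc: "rvec_entry N p' c < rvec_entry N p c"
  proof -
    define A1 where "A1 = {j\<in>{1..N}. player_cong N p' j = c}"
    define A0 where "A0 = {j\<in>{1..N}. player_cong N p j = c}"
    define B1 where "B1 = {j\<in>{1..N}. player_len p' j = c}"
    define B0 where "B0 = {j\<in>{1..N}. player_len p j = c}"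
    have sA: "A1 \<subseteq> A0 - {i}"
    proof
      fix j assume "j \<in> A1"
      hence j: "j \<in> {1..N}" "player_cong N p' j = c" unfolding A1_def by auto
      hence ji: "j \<noteq> i" using ci' by auto
      have "player_cong N p j = c"
      proof (rule ccontr)
        assume "player_cong N p j \<noteq> c"
        moreover have "c > 0" using lt by simp
        ultimately show False using A[of j] B[OF ji] j by fastforce
      qed
      thus "j \<in> A0 - {i}" using j ji unfolding A0_def by auto
    qed
    have sB: "B1 \<subseteq> B0 - {i}"
    proof
      fix j assume "j \<in> B1"
      hence j: "j \<in> {1..N}" "player_len p' j = c" unfolding B1_def by auto
      hence ji: "j \<noteq> i" using ci' by auto
      thus "j \<in> B0 - {i}" using j p'j[OF ji] unfolding B0_def player_len_def by auto
    qed
    have fin: "finite A0" "finite B0" unfolding A0_def B0_def by auto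
    have "card A1 + card B1 < card A0 + card B0"
    proof (cases "player_cong N p i = c")
      case True
      hence "i \<in> A0" using assms(3) unfolding A0_def by auto
      hence "A1 \<subset> A0" using sA by blast
      hence "card A1 < card A0" using fin by (simp add: psubset_card_mono)
      moreover have "card B1 \<le> card B0" using sB fin by (intro card_mono) auto
      ultimately show ?thesis by simp
    next
      case False
      hence "i \<in> B0" using cmax assms(3) unfolding B0_def by auto
      hence "B1 \<subset> B0" using sB by blast
      hence "card B1 < card B0" using fin by (simp add: psubset_card_mono)
      moreover have "card A1 \<le> card A0" using sA fin by (intro card_mono) auto
      ultimately show ?thesis by simp
    qed
    thus ?thesis unfolding rvec_entry_def A1_def A0_def B1_def B0_def .
  qed
  have cpos: "1 \<le> c" using lt by simp
  have fU: "finite (\<Union>i\<in>{1..N}. P i)" using assms(1) unfolding routing_game_def by auto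
  have "p i \<in> (\<Union>i\<in>{1..N}. P i)" using assms(2,3) unfolding is_routing_def by force
  hence "player_len p i \<le> max_path_len N P"
    unfolding max_path_len_def player_len_def using fU by simp
  moreover have "player_cong N p i \<le> N" by (rule pc_le_N)
  ultimately have "max (player_cong N p i) (player_len p i) \<le> max N (max_path_len N P)"
    by (metis max.coboundedI1 max.coboundedI2 max.boundedI)
  hence "c \<le> rvec_len N P" unfolding c_def player_cost_def rvec_len_def .
  thus ?thesis unfolding routing_less_def p'_def[symmetric]
    using cpos hi atc by (intro bexI[of _ c]) auto
qed

end
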